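(* If $[w,n] \in \mathbb{W}$ and $\alpha \vDash \ell(w)$ are such that $\mathrm{Des}(w) = I(\alpha)$ then $\Psi_{\leq}([w,n]) = L_\alpha$, $\Psi_{>}([w,n]) = L_{\alpha^{\tt c}}$, $\Psi_{\geq}([w^{\tt r},n]) = L_{\alpha^{\tt r}}$, and $\Psi_{<}([w^{\tt r},n]) = L_{\alpha^{\tt t}}$.
   Context: Let $\Bbbk$ be a field. For a word $w=w_1\cdots w_m$ of positive integers with $\max(w)\le n$, $[w,n]$ is the linear endomorphism of the $\Bbbk$-span of all words sending a word $v$ of length $n$ to $v_{w_1}\cdots v_{w_m}$ and others to $0$; $\mathbb{W}$ is the set of these and $\textbf{W}$ their span, a graded bialgebra (degree $\ell(w)$) with product $[v,m]\otimes[w,n]\mapsto[v\sqcup\!\sqcup(w\uparrow m),m+n]$ and deconcatenation coproduct $\Delta_\odot([w,n])=\sum_i[w_1\cdots w_i,n]\otimes[w_{i+1}\cdots w_m,n]$, counit $1$ on $[\emptyset,n]$ and $0$ otherwise. Let $\zeta_\le:\textbf{W}\to\Bbbk$ send $[w,n]$ to $1$ if $w$ is weakly increasing and $0$ otherwise; $\zeta_\ge,\zeta_<,\zeta_>$ are defined likewise with weakly decreasing, strictly increasing, strictly decreasing. For $\bullet\in\{\le,\ge,<,>\}$, $\Psi_\bullet:\textbf{W}\to\textsf{QSym}$ is $\Psi_\bullet(x)=\sum_\alpha(\zeta_\bullet)_\alpha(x)M_\alpha$, where $M_\alpha$ is the monomial quasi-symmetric function and, for $\alpha=(\alpha_1,\dots,\alpha_m)$,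 $(\zeta_\bullet)_\alpha$ is the iterated coproduct into $\textbf{W}^{\otimes m}$, followed by projection onto degrees $\alpha_1,\dots,\alpha_m$, $\zeta_\bullet^{\otimes m}$, and multiplication (with $(\zeta_\bullet)_\emptyset$ the counit); it is the unique combinatorial bialgebra morphism $(\textbf{W},\zeta_\bullet)\to(\textsf{QSym},\zeta_{\textsf{QSym}})$. For $\alpha=(\alpha_1,\dots,\alpha_l)\vDash n$, $I(\alpha)=\{\alpha_1,\alpha_1+\alpha_2,\dots,\alpha_1+\cdots+\alpha_{l-1}\}$; $L_\alpha=\sum_{I(\alpha)\subseteq I(\beta)}M_\beta$ is the fundamental quasi-symmetric function; $\alpha^{\tt r}=(\alpha_l,\dots,\alpha_1)$, $\alpha^{\tt c}$ is the composition with $I(\alpha^{\tt c})=\{1,\dots,n-1\}\setminus I(\alpha)$, $\alpha^{\tt t}=(\alpha^{\tt r})^{\tt c}$. For a word $w$, $w^{\tt r}$ is its reversal and $\mathrm{Des}(w)=\{i:w_i>w_{i+1}\}$. *)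

theory Defs
  imports Main
begin

(* A basis element [w,n] of W is represented by the pair (w,n) with w a word of
   positive integers and max(w) <= n. *)
definition in_WW :: "nat list \<times> nat \<Rightarrow> bool" where
  "in_WW x = (\<forall>a\<in>set (fst x). 1 \<le> a \<and> a \<le> snd x)"

definition is_comp :: "nat \<Rightarrow> nat list \<Rightarrow> bool" where
  "is_comp m \<alpha> = ((\<forall>a\<in>set \<alpha>. 0 < a) \<and> sum_list \<alpha> = m)"

definition Iset :: "nat list \<Rightarrow> nat set" where
  "Iset \<alpha> = {sum_list (take k \<alpha>) | k. 1 \<le> k \<and> k < length \<alpha>}"

(* Des(w) = {i : w_i > w_{i+1}}, positions 1-indexed *)
definition Des :: "nat list \<Rightarrow> nat set" where
  "Des w = {i. 1 \<le> i \<and> i < length w \<and> w ! (i - 1) > w ! i}"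

definition comp_c :: "nat list \<Rightarrow> nat list" where
  "comp_c \<alpha> = (THE \<beta>. is_comp (sum_list \<alpha>) \<beta> \<and>
                 Iset \<beta> = {1..<sum_list \<alpha>} - Iset \<alpha>)"

definition comp_t :: "nat list \<Rightarrow> nat list" where
  "comp_t \<alpha> = comp_c (rev \<alpha>)"

(* Elements of QSym are represented by their coefficient functions in the
   monomial basis: f represents sum_alpha f(alpha) M_alpha (f supported on
   compositions). *)
type_synonym 'k qsym = "nat list \<Rightarrow> 'k"

definition fundL :: "nat list \<Rightarrow> 'k::field qsym" where
  "fundL \<alpha> = (\<lambda>\<beta>. if is_comp (sum_list \<alpha>) \<beta> \<and> Iset \<alpha> \<subseteq> Iset \<beta> then 1 else 0)"

definition zeta_le :: "nat list \<times> nat \<Rightarrow> 'k::field" where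
  "zeta_le x = (if sorted_wrt (\<le>) (fst x) then 1 else 0)"
definition zeta_ge :: "nat list \<times> nat \<Rightarrow> 'k::field" where
  "zeta_ge x = (if sorted_wrt (\<ge>) (fst x) then 1 else 0)"
definition zeta_lt :: "nat list \<times> nat \<Rightarrow> 'k::field" where
  "zeta_lt x = (if sorted_wrt (<) (fst x) then 1 else 0)"
definition zeta_gt :: "nat list \<times> nat \<Rightarrow> 'k::field" where
  "zeta_gt x = (if sorted_wrt (>) (fst x) then 1 else 0)"

fun chunks :: "nat list \<Rightarrow> 'a list \<Rightarrow> 'a list list" where
  "chunks [] w = []"
| "chunks (a # as) w = take a w # chunks as (drop a w)"

(* (zeta)_alpha([w,n]): the iterated deconcatenation coproduct of [w,n] into
   W^{\<otimes> m} is sum over splittings w = u_1...u_m of [u_1,n] \<otimes> ... \<otimes> [u_m,n];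
   projecting onto degrees alpha_1..alpha_m keeps the unique splitting with
   |u_i| = alpha_i (if sum alpha = l(w)), then apply zeta^{\<otimes> m} and multiply.
   For alpha = [] this is the counit. *)
definition zeta_alpha :: "(nat list \<times> nat \<Rightarrow> 'k::field) \<Rightarrow> nat list \<Rightarrow> nat list \<times> nat \<Rightarrow> 'k" where
  "zeta_alpha \<zeta> \<alpha> x =
     (if sum_list \<alpha> = length (fst x)
      then prod_list (map (\<lambda>u. \<zeta> (u, snd x)) (chunks \<alpha> (fst x))) else 0)"

definition Psi :: "(nat list \<times> nat \<Rightarrow> 'k::field) \<Rightarrow> nat list \<times> nat \<Rightarrow> 'k qsym" where
  "Psi \<zeta> x = (\<lambda>\<alpha>. if (\<forall>a\<in>set \<alpha>. 0 < a) then zeta_alpha \<zeta> \<alpha> x else 0)"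

end

theory Submission
  imports Defs
begin

definition Cs :: "nat list \<Rightarrow> nat set" where
  "Cs \<beta> = {sum_list (take k \<beta>) | k. k \<le> length \<beta>}"

lemma Cs_Nil[simp]: "Cs [] = {0}"
  by (auto simp: Cs_def)

lemma Cs_Cons[simp]: "Cs (a # bs) = insert 0 ((+) a ` Cs bs)"
proof -
  have "Cs (a # bs) = {sum_list (take k (a#bs)) | k. k \<le> Suc (length bs)}"
    by (simp add: Cs_def)
  also have "\<dots> = insert 0 ((+) a ` Cs bs)"
  proof (rule set_eqI, rule iffI)
    fix x assume "x \<in> {sum_list (take k (a#bs)) | k. k \<le> Suc (length bs)}"
    then obtain k where k: "k \<le> Suc (length bs)" "x = sum_list (take k (a#bs))" by blast
    show "x \<in> insert 0 ((+) a ` Cs bs)"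
    proof (cases k)
      case 0 then show ?thesis using k by simp
    next
      case (Suc k') then show ?thesis using k by (auto simp: Cs_def)
    qed
  next
    fix x assume "x \<in> insert 0 ((+) a ` Cs bs)"
    then show "x \<in> {sum_list (take k (a#bs)) | k. k \<le> Suc (length bs)}"
    proof
      assume "x = 0" then show ?thesis by (intro CollectI exI[of _ 0]) auto
    next
      assume "x \<in> (+) a ` Cs bs"
      then obtain k where "k \<le> length bs" "x = a + sum_list (take k bs)" by (auto simp: Cs_def)
      then show ?thesis by (intro CollectI exI[of _ "Suc k"]) auto
    qed
  qed
  finally show ?thesis .
qed

lemma Cs_le: "x \<in> Cs \<beta> \<Longrightarrow> x \<le> sum_list \<beta>"
  by (induction \<beta> arbitrary: x) auto

lemma Cs_0: "0 \<in> Cs \<beta>" by (cases \<beta>) auto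

lemma Cs_sum: "sum_list \<beta> \<in> Cs \<beta>"
  by (induction \<beta>) auto

lemma Cs_append: "Cs (xs @ ys) = Cs xs \<union> (+) (sum_list xs) ` Cs ys"
proof (induction xs)
  case Nil then show ?case using Cs_0[of ys] by (simp add: insert_absorb)
next
  case (Cons a xs) then show ?case by (simp add: image_Un image_image add.assoc)
qed

lemma Cs_Iset: "Cs \<beta> = insert 0 (insert (sum_list \<beta>) (Iset \<beta>))"
proof -
  have "x \<in> insert 0 (insert (sum_list \<beta>) (Iset \<beta>))" if xC: "x \<in> Cs \<beta>" for x
  proof -
    obtain k where k: "k \<le> length \<beta>" "x = sum_list (take k \<beta>)" using xC unfolding Cs_def by blast
    show ?thesis
    proof (cases "k = 0 \<or> k = length \<beta>")
      case True then show ?thesis using k by (metis insertCI take_0 sum_list.Nil take_all_iff order_refl)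
    next
      case False then have "1 \<le> k" "k < length \<beta>" using k(1) by auto
      then show ?thesis unfolding Iset_def using k by blast
    qed
  qed
  moreover have "Iset \<beta> \<subseteq> Cs \<beta>" by (auto simp: Iset_def Cs_def)
  ultimately show ?thesis using Cs_0[of \<beta>] Cs_sum[of \<beta>] by (intro equalityI subsetI) auto
qed

lemma pos_sum: "\<forall>a\<in>set (xs::nat list). 0 < a \<Longrightarrow> xs \<noteq> [] \<Longrightarrow> 0 < sum_list xs"
  using member_le_sum_list[of "hd xs" xs] by (cases xs) auto

lemma Iset_range: assumes "\<forall>a\<in>set \<beta>. 0 < a" shows "Iset \<beta> \<subseteq> {0<..<sum_list \<beta>}"
proof
  fix x assume xI: "x \<in> Iset \<beta>"
  then obtain k where k: "1 \<le> k" "k < length \<beta>" "x = sum_list (take k \<beta>)" by (auto simp: Iset_def)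
  have "0 < sum_list (take k \<beta>)"
    using k assms by (intro pos_sum) (auto dest: in_set_takeD)
  moreover have "0 < sum_list (drop k \<beta>)"
    using k assms by (intro pos_sum) (auto dest: in_set_dropD)
  moreover have "sum_list \<beta> = sum_list (take k \<beta>) + sum_list (drop k \<beta>)"
    by (metis append_take_drop_id sum_list_append)
  ultimately show "x \<in> {0<..<sum_list \<beta>}" using k by auto
qed

lemma Iset_Cs: assumes "\<forall>a\<in>set \<beta>. 0 < a" shows "Iset \<beta> = Cs \<beta> \<inter> {0<..<sum_list \<beta>}"
  using Iset_range[OF assms] Cs_Iset[of \<beta>] by auto


lemma prod01: "prod_list (map (\<lambda>u. if P u then 1 else 0) xs) = (if \<forall>u\<in>set xs. P u then (1::'k::field) else 0)"
  by (induction xs) auto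

lemma adj_take: assumes "transp R" "a \<le> length w"
  shows "sorted_wrt R (take a w) \<longleftrightarrow> (\<forall>j. Suc j < a \<longrightarrow> R (w!j) (w!Suc j))"
  using assms by (simp add: sorted_wrt_iff_nth_Suc_transp min_def)

lemma chunks_adj:
  assumes "transp R" "sum_list \<beta> = length w"
  shows "(\<forall>u\<in>set (chunks \<beta> w). sorted_wrt R u) \<longleftrightarrow>
         (\<forall>i. Suc i < length w \<longrightarrow> Suc i \<notin> Cs \<beta> \<longrightarrow> R (w!i) (w!Suc i))"
  using assms(2)
proof (induction \<beta> arbitrary: w)
  case Nil then show ?case by simp
next
  case (Cons a bs)
  define v where "v = drop a w"
  have al: "a \<le> length w" and lv: "length v = sum_list bs" using Cons.prems by (auto simp: v_def)
  have L: "(\<forall>u\<in>set (chunks (a#bs) w). sorted_wrt R u) \<longleftrightarrow>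
     (\<forall>j. Suc j < a \<longrightarrow> R (w!j) (w!Suc j)) \<and>
     (\<forall>i. Suc i < length v \<longrightarrow> Suc i \<notin> Cs bs \<longrightarrow> R (w!(a+i)) (w!(a+Suc i)))"
    using Cons.IH[OF lv[symmetric]] adj_take[OF assms(1) al] al by (simp add: v_def)
  have imge: "y \<in> (+) a ` Cs bs \<Longrightarrow> a \<le> y" for y by auto
  show ?case unfolding L
  proof (intro iffI conjI allI impI)
    fix j assume H: "\<forall>i. Suc i < length w \<longrightarrow> Suc i \<notin> Cs (a # bs) \<longrightarrow> R (w ! i) (w ! Suc i)"
      and j: "Suc j < a"
    have "Suc j \<notin> Cs (a # bs)" using imge[of "Suc j"] j by auto
    moreover have "Suc j < length w" using j al by auto
    ultimately show "R (w!j) (w!Suc j)" using H by blast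
  next
    fix i assume H: "\<forall>i. Suc i < length w \<longrightarrow> Suc i \<notin> Cs (a # bs) \<longrightarrow> R (w ! i) (w ! Suc i)"
      and i: "Suc i < length v" "Suc i \<notin> Cs bs"
    have "Suc (a+i) \<notin> Cs (a # bs)" using i(2) by auto
    moreover have "Suc (a+i) < length w" using i(1) al by (simp add: v_def)
    ultimately show "R (w!(a+i)) (w!(a+Suc i))" using H by auto
  next
    fix i assume H: "(\<forall>j. Suc j < a \<longrightarrow> R (w!j) (w!Suc j)) \<and>
     (\<forall>i. Suc i < length v \<longrightarrow> Suc i \<notin> Cs bs \<longrightarrow> R (w!(a+i)) (w!(a+Suc i)))"
      and i: "Suc i < length w" "Suc i \<notin> Cs (a # bs)"
    show "R (w!i) (w!Suc i)"
    proof (cases "Suc i < a")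
      case True then show ?thesis using H by auto
    next
      case False
      have "Suc i \<noteq> a" using i(2) Cs_0[of bs] by auto
      with False obtain i' where ii: "i = a + i'" by (metis add_Suc_right le_SucE not_less less_imp_add_positive less_or_eq_imp_le nat_le_iff_add)
      have "Suc i' \<notin> Cs bs" using i(2) ii by auto
      moreover have "Suc i' < length v" using i(1) ii al by (simp add: v_def)
      ultimately show ?thesis using H ii by auto
    qed
  qed
qed

lemma chunks_append: "sum_list as \<le> length w \<Longrightarrow>
   chunks (as @ bs) w = chunks as (take (sum_list as) w) @ chunks bs (drop (sum_list as) w)"
proof (induction as arbitrary: w)
  case Nil then show ?case by simp
next
  case (Cons a as)
  define S where "S = sum_list as"
  have le: "S \<le> length (drop a w)" using Cons.prems by (simp add: S_def)
  have "chunks ((a # as) @ bs) w = take a w # chunks (as @ bs) (drop a w)" by simp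
  also have "\<dots> = take a w # chunks as (take S (drop a w)) @ chunks bs (drop S (drop a w))"
    using Cons.IH[OF le[unfolded S_def]] by (simp add: S_def)
  also have "take a w = take a (take (a + S) w)" by simp
  also have "take S (drop a w) = drop a (take (a + S) w)" by (simp add: drop_take)
  also have "drop S (drop a w) = drop (a + S) w" by (simp add: add.commute)
  finally show ?case by (simp add: S_def)
qed

lemma chunks_rev: "sum_list \<beta> = length w \<Longrightarrow> chunks \<beta> (rev w) = rev (map rev (chunks (rev \<beta>) w))"
proof (induction \<beta> arbitrary: w)
  case Nil then show ?case by simp
next
  case (Cons a bs)
  define s where "s = sum_list bs"
  have ls: "length w = a + s" using Cons.prems by (simp add: s_def)
  have "chunks (rev bs @ [a]) w = chunks (rev bs) (take s w) @ [take a (drop s w)]"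
    using chunks_append[of "rev bs" w "[a]"] ls by (simp add: s_def)
  moreover have "take a (rev w) = rev (take a (drop s w))" using ls by (simp add: take_rev)
  moreover have "drop a (rev w) = rev (take s w)" using ls by (simp add: drop_rev)
  moreover have "chunks bs (rev (take s w)) = rev (map rev (chunks (rev bs) (take s w)))"
    using Cons.IH[of "take s w"] ls by (simp add: s_def)
  ultimately show ?case by simp
qed


lemma Cs_rev: "Cs (rev \<beta>) = (\<lambda>x. sum_list \<beta> - x) ` Cs \<beta>"
proof (induction \<beta>)
  case Nil then show ?case by simp
next
  case (Cons a bs)
  define s where "s = sum_list bs"
  have "Cs (rev (a # bs)) = (\<lambda>x. s - x) ` Cs bs \<union> {s, s + a}"
    using Cons.IH by (simp add: Cs_append s_def)
  also have "\<dots> = insert (s + a) ((\<lambda>x. s - x) ` Cs bs)"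
    using Cs_0[of bs] by force
  also have "(\<lambda>x. s - x) ` Cs bs = (\<lambda>x. a + s - x) ` (+) a ` Cs bs"
    by (simp add: image_image)
  also have "insert (s + a) ((\<lambda>x. a + s - x) ` (+) a ` Cs bs) = (\<lambda>x. sum_list (a#bs) - x) ` Cs (a # bs)"
    by (simp add: s_def add.commute)
  finally show ?case .
qed

lemma Iset_rev: assumes "\<forall>a\<in>set \<beta>. 0 < a"
  shows "Iset (rev \<beta>) = (\<lambda>x. sum_list \<beta> - x) ` Iset \<beta>"
proof -
  have p: "\<forall>a\<in>set (rev \<beta>). 0 < a" using assms by simp
  let ?m = "sum_list \<beta>"
  have "Iset (rev \<beta>) = (\<lambda>x. ?m - x) ` Cs \<beta> \<inter> {0<..<?m}"
    using Iset_Cs[OF p] Cs_rev[of \<beta>] by simp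
  also have "\<dots> = (\<lambda>x. ?m - x) ` (Cs \<beta> \<inter> {0<..<?m})"
  proof (intro equalityI subsetI)
    fix y assume "y \<in> (\<lambda>x. ?m - x) ` Cs \<beta> \<inter> {0<..<?m}"
    then obtain c where c: "c \<in> Cs \<beta>" "y = ?m - c" "0 < y" "y < ?m" by auto
    have "c \<le> ?m" using Cs_le[OF c(1)] .
    then have "c \<in> Cs \<beta> \<inter> {0<..<?m}" using c by auto
    then show "y \<in> (\<lambda>x. ?m - x) ` (Cs \<beta> \<inter> {0<..<?m})" using c(2) by blast
  next
    fix y assume "y \<in> (\<lambda>x. ?m - x) ` (Cs \<beta> \<inter> {0<..<?m})"
    then show "y \<in> (\<lambda>x. ?m - x) ` Cs \<beta> \<inter> {0<..<?m}" by auto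
  qed
  also have "\<dots> = (\<lambda>x. ?m - x) ` Iset \<beta>" using Iset_Cs[OF assms] by simp
  finally show ?thesis .
qed

lemma comp_exists:
  "S \<subseteq> {0<..<m} \<Longrightarrow> \<exists>\<beta>. (\<forall>a\<in>set \<beta>. 0 < a) \<and> sum_list \<beta> = m \<and> Cs \<beta> = S \<union> {0, m}"
proof (induction m arbitrary: S)
  case 0 then show ?case by (intro exI[of _ "[]"]) auto
next
  case (Suc m)
  show ?case
  proof (cases "m = 0")
    case True
    then have "S = {}" using Suc.prems by auto
    then show ?thesis using True by (intro exI[of _ "[1]"]) auto
  next
    case False
    define S' where "S' = S - {m}"
    have "S' \<subseteq> {0<..<m}" using Suc.prems by (auto simp: S'_def)
    from Suc.IH[OF this] obtain \<beta>' where b: "\<forall>a\<in>set \<beta>'. 0 < a" "sum_list \<beta>' = m" "Cs \<beta>' = S' \<union> {0, m}" by blast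
    show ?thesis
    proof (cases "m \<in> S")
      case True
      have "Cs (\<beta>' @ [1]) = S \<union> {0, Suc m}"
        using b True by (auto simp: Cs_append S'_def)
      then show ?thesis using b by (intro exI[of _ "\<beta>' @ [1]"]) auto
    next
      case mS: False
      have "\<beta>' \<noteq> []" using b False by auto
      then obtain xs b0 where xb: "\<beta>' = xs @ [b0]" by (metis rev_exhaust)
      have b0: "0 < b0" using b(1) xb by auto
      have sx: "sum_list xs + b0 = m" using b(2) xb by simp
      have Cb: "Cs \<beta>' = Cs xs \<union> {m}" using xb sx Cs_sum[of xs] by (auto simp: Cs_append)
      have mx: "m \<notin> Cs xs" using Cs_le[of m xs] sx b0 by auto
      have Cx: "Cs xs = S' \<union> {0}" using Cb b(3) mx Cs_0[of xs] by (auto simp: S'_def)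
      have "Cs (xs @ [Suc b0]) = Cs xs \<union> {sum_list xs, Suc m}"
        using sx by (auto simp: Cs_append)
      also have "\<dots> = Cs xs \<union> {Suc m}" using Cs_sum[of xs] by blast
      also have "S' = S" using mS by (simp add: S'_def)
      then have "Cs xs \<union> {Suc m} = S \<union> {0, Suc m}" using Cx by auto
      finally have "Cs (xs @ [Suc b0]) = S \<union> {0, Suc m}" .
      then show ?thesis using b xb sx by (intro exI[of _ "xs @ [Suc b0]"]) auto
    qed
  qed
qed

lemma comp_unique:
  "\<forall>a\<in>set \<beta>. 0 < a \<Longrightarrow> \<forall>a\<in>set \<gamma>. 0 < a \<Longrightarrow> sum_list \<beta> = sum_list \<gamma> \<Longrightarrow> Cs \<beta> = Cs \<gamma> \<Longrightarrow> \<beta> = \<gamma>"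
proof (induction \<beta> arbitrary: \<gamma>)
  case Nil
  show ?case
  proof (cases \<gamma>)
    case (Cons c cs)
    then have "0 < c" using Nil.prems(2) by simp
    then show ?thesis using Nil.prems(3) Cons by simp
  qed simp
next
  case (Cons a bs)
  have a: "0 < a" using Cons.prems(1) by simp
  obtain c cs where g: "\<gamma> = c # cs"
  proof (cases \<gamma>)
    case Nil then show ?thesis using Cons.prems(3) a by simp
  qed
  have c: "0 < c" using Cons.prems(2) g by simp
  have ceq: "Cs (a # bs) = Cs (c # cs)" using Cons.prems(4) g by (simp del: Cs_Cons)
  have "a \<in> Cs (a # bs)" using Cs_0[of bs] by simp
  then have "a \<in> Cs (c # cs)" using ceq by (simp del: Cs_Cons)
  then have "a \<in> insert 0 ((+) c ` Cs cs)" by simp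
  then have "c \<le> a" using a by auto
  moreover have "c \<in> Cs (c # cs)" using Cs_0[of cs] by simp
  then have "c \<in> Cs (a # bs)" using ceq by (simp del: Cs_Cons)
  then have "c \<in> insert 0 ((+) a ` Cs bs)" by simp
  then have "a \<le> c" using c by auto
  ultimately have ac: "a = c" by simp
  have "(+) a ` Cs bs = (+) a ` Cs cs"
  proof -
    have "insert 0 ((+) a ` Cs bs) = insert 0 ((+) a ` Cs cs)" using ceq ac by simp
    moreover have "0 \<notin> (+) a ` Cs bs" "0 \<notin> (+) a ` Cs cs" using a by auto
    ultimately show ?thesis by (metis insert_ident)
  qed
  then have cc: "Cs bs = Cs cs" by (simp add: inj_image_eq_iff)
  have "\<forall>a\<in>set bs. 0 < a" using Cons.prems(1) by simp
  moreover have "\<forall>a\<in>set cs. 0 < a" using Cons.prems(2) g by simp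
  moreover have "sum_list bs = sum_list cs" using Cons.prems(3) g ac by simp
  ultimately have "bs = cs" using Cons.IH cc by blast
  then show ?case using g ac by simp
qed

lemma comp_c_prop: assumes "\<forall>a\<in>set \<alpha>. 0 < a"
  shows "(\<forall>a\<in>set (comp_c \<alpha>). 0 < a) \<and> sum_list (comp_c \<alpha>) = sum_list \<alpha> \<and>
         Iset (comp_c \<alpha>) = {0<..<sum_list \<alpha>} - Iset \<alpha>"
proof -
  let ?m = "sum_list \<alpha>"
  let ?S = "{0<..<?m} - Iset \<alpha>"
  have e1: "{1..<?m} = {0<..<?m}" by auto
  obtain \<beta> where b: "\<forall>a\<in>set \<beta>. 0 < a" "sum_list \<beta> = ?m" "Cs \<beta> = ?S \<union> {0, ?m}"
    using comp_exists[of ?S ?m] by auto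
  have ib: "Iset \<beta> = ?S" using Iset_Cs[OF b(1)] b by auto
  have "\<exists>!\<beta>. is_comp ?m \<beta> \<and> Iset \<beta> = {1..<?m} - Iset \<alpha>"
  proof (rule ex1I[of _ \<beta>])
    show "is_comp ?m \<beta> \<and> Iset \<beta> = {1..<?m} - Iset \<alpha>" using b ib e1 by (simp add: is_comp_def)
  next
    fix \<gamma> assume g: "is_comp ?m \<gamma> \<and> Iset \<gamma> = {1..<?m} - Iset \<alpha>"
    then have "Cs \<gamma> = Cs \<beta>" using ib b e1 by (simp add: Cs_Iset is_comp_def)
    then show "\<gamma> = \<beta>" using g b by (intro comp_unique) (auto simp: is_comp_def)
  qed
  from theI'[OF this] show ?thesis unfolding comp_c_def[symmetric] using e1 by (simp add: is_comp_def)
qed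


lemma Psi_char:
  assumes "transp R" "\<And>x. \<zeta> x = (if sorted_wrt R (fst x) then 1 else (0::'k::field))"
  shows "Psi \<zeta> (w,n) \<beta> = (if (\<forall>a\<in>set \<beta>. 0<a) \<and> sum_list \<beta> = length w \<and>
     (\<forall>i. Suc i < length w \<longrightarrow> Suc i \<notin> Cs \<beta> \<longrightarrow> R (w!i) (w!Suc i)) then 1 else 0)"
proof -
  have m: "map (\<lambda>u. \<zeta> (u, n)) xs = map (\<lambda>u. if sorted_wrt R u then 1 else 0) xs" for xs
    using assms(2) by simp
  have "Psi \<zeta> (w,n) \<beta> = (if (\<forall>a\<in>set \<beta>. 0<a) \<and> sum_list \<beta> = length w \<and>
     (\<forall>u\<in>set (chunks \<beta> w). sorted_wrt R u) then 1 else 0)"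
    by (auto simp: Psi_def zeta_alpha_def assms(2) prod01)
  then show ?thesis using chunks_adj[OF assms(1), of \<beta> w] by auto
qed

lemma Psi_rev:
  assumes "transp R" "\<And>x. \<zeta> x = (if sorted_wrt R (fst x) then 1 else (0::'k::field))"
  shows "Psi \<zeta> (rev w,n) \<beta> = (if (\<forall>a\<in>set \<beta>. 0<a) \<and> sum_list \<beta> = length w \<and>
     (\<forall>i. Suc i < length w \<longrightarrow> Suc i \<notin> Cs (rev \<beta>) \<longrightarrow> R (w!Suc i) (w!i)) then 1 else 0)"
proof -
  have m: "map (\<lambda>u. \<zeta> (u, n)) xs = map (\<lambda>u. if sorted_wrt R u then 1 else 0) xs" for xs
    using assms(2) by simp
  have tr: "transp (\<lambda>x y. R y x)" using assms(1) by (auto simp: transp_def)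
  have "sum_list \<beta> = length w \<Longrightarrow> (\<forall>u\<in>set (chunks \<beta> (rev w)). sorted_wrt R u) \<longleftrightarrow>
      (\<forall>u\<in>set (chunks (rev \<beta>) w). sorted_wrt (\<lambda>x y. R y x) u)"
    by (simp add: chunks_rev sorted_wrt_rev)
  moreover have "Psi \<zeta> (rev w,n) \<beta> = (if (\<forall>a\<in>set \<beta>. 0<a) \<and> sum_list \<beta> = length w \<and>
     (\<forall>u\<in>set (chunks \<beta> (rev w)). sorted_wrt R u) then 1 else 0)"
    by (auto simp: Psi_def zeta_alpha_def assms(2) prod01)
  ultimately show ?thesis using chunks_adj[OF tr, of "rev \<beta>" w] by auto
qed

lemma desc_cond: "(\<forall>i. Suc i < length w \<longrightarrow> Suc i \<notin> C \<longrightarrow> w!i \<le> w!Suc i) \<longleftrightarrow> Des w \<subseteq> C"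
proof
  assume H: "\<forall>i. Suc i < length w \<longrightarrow> Suc i \<notin> C \<longrightarrow> w!i \<le> w!Suc i"
  show "Des w \<subseteq> C"
  proof
    fix j assume "j \<in> Des w"
    then have j: "1 \<le> j" "j < length w" "w!(j-1) > w!j" by (auto simp: Des_def)
    then obtain i where "j = Suc i" by (cases j) auto
    then show "j \<in> C" using H j by auto
  qed
next
  assume "Des w \<subseteq> C"
  then show "\<forall>i. Suc i < length w \<longrightarrow> Suc i \<notin> C \<longrightarrow> w!i \<le> w!Suc i"
    by (auto simp: Des_def subset_iff not_le[symmetric])
qed

lemma asc_cond: "(\<forall>i. Suc i < length w \<longrightarrow> Suc i \<notin> C \<longrightarrow> w!i > w!Suc i) \<longleftrightarrow> {0<..<length w} - Des w \<subseteq> C"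
proof
  assume H: "\<forall>i. Suc i < length w \<longrightarrow> Suc i \<notin> C \<longrightarrow> w!i > w!Suc i"
  show "{0<..<length w} - Des w \<subseteq> C"
  proof
    fix j assume "j \<in> {0<..<length w} - Des w"
    then have j: "0 < j" "j < length w" "j \<notin> Des w" by auto
    then obtain i where i: "j = Suc i" by (cases j) auto
    then show "j \<in> C" using H j by (auto simp: Des_def)
  qed
next
  assume H: "{0<..<length w} - Des w \<subseteq> C"
  show "\<forall>i. Suc i < length w \<longrightarrow> Suc i \<notin> C \<longrightarrow> w!i > w!Suc i"
  proof (intro allI impI)
    fix i assume "Suc i < length w" "Suc i \<notin> C"
    then have "Suc i \<in> Des w" using H by auto
    then show "w!i > w!Suc i" by (simp add: Des_def)
  qed
qed

lemma flip_sub: fixes m :: nat assumes "A \<subseteq> {0<..<m}" "C \<subseteq> {..m}"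
  shows "(A \<subseteq> (\<lambda>x. m - x) ` C) \<longleftrightarrow> ((\<lambda>x. m - x) ` A \<subseteq> C \<inter> {0<..<m})"
proof
  assume H: "A \<subseteq> (\<lambda>x. m - x) ` C"
  show "(\<lambda>x. m - x) ` A \<subseteq> C \<inter> {0<..<m}"
  proof
    fix y assume "y \<in> (\<lambda>x. m - x) ` A"
    then obtain x where x: "x \<in> A" "y = m - x" by auto
    then obtain c where c: "c \<in> C" "x = m - c" using H by auto
    have "c \<le> m" using c assms(2) by auto
    then have "y = c" using x c by (simp add: diff_diff_cancel)
    moreover have "0 < x" "x < m" using x(1) assms(1) by auto
    ultimately show "y \<in> C \<inter> {0<..<m}" using c x \<open>c \<le> m\<close> by auto
  qed
next
  assume H: "(\<lambda>x. m - x) ` A \<subseteq> C \<inter> {0<..<m}"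
  show "A \<subseteq> (\<lambda>x. m - x) ` C"
  proof
    fix x assume x: "x \<in> A"
    then have "m - x \<in> C" using H by auto
    moreover have "x = m - (m - x)" using x assms(1) by auto
    ultimately show "x \<in> (\<lambda>x. m - x) ` C" by blast
  qed
qed

lemma flip_diff: fixes m :: nat assumes "B \<subseteq> {0<..<m}"
  shows "(\<lambda>x. m - x) ` ({0<..<m} - B) = {0<..<m} - (\<lambda>x. m - x) ` B"
proof (intro equalityI subsetI)
  fix y assume "y \<in> (\<lambda>x. m - x) ` ({0<..<m} - B)"
  then obtain x where x: "x \<in> {0<..<m}" "x \<notin> B" "y = m - x" by auto
  have "y \<notin> (\<lambda>x. m - x) ` B"
  proof
    assume "y \<in> (\<lambda>x. m - x) ` B"
    then obtain b where b: "b \<in> B" "y = m - b" by auto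
    have "b < m" using b assms by auto
    then have "b = x" using x b by linarith
    then show False using b x by simp
  qed
  then show "y \<in> {0<..<m} - (\<lambda>x. m - x) ` B" using x by auto
next
  fix y assume y: "y \<in> {0<..<m} - (\<lambda>x. m - x) ` B"
  then have "m - y \<notin> B"
    by (metis DiffD1 DiffD2 diff_diff_cancel greaterThanLessThan_iff image_eqI less_imp_le)
  moreover have "y = m - (m - y)" "m - y \<in> {0<..<m}" using y by auto
  ultimately show "y \<in> (\<lambda>x. m - x) ` ({0<..<m} - B)" by blast
qed

theorem proposition5p5:
  fixes w :: "nat list" and n :: nat and \<alpha> :: "nat list"
  assumes "in_WW (w, n)"
    and "is_comp (length w) \<alpha>"
    and "Des w = Iset \<alpha>"
  shows "Psi (zeta_le :: _ \<Rightarrow> 'k::field) (w, n) = fundL \<alpha>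
       \<and> Psi (zeta_gt :: _ \<Rightarrow> 'k::field) (w, n) = fundL (comp_c \<alpha>)
       \<and> Psi (zeta_ge :: _ \<Rightarrow> 'k::field) (rev w, n) = fundL (rev \<alpha>)
       \<and> Psi (zeta_lt :: _ \<Rightarrow> 'k::field) (rev w, n) = fundL (comp_t \<alpha>)"
proof -
  let ?m = "length w"
  let ?f = "\<lambda>x. ?m - x"
  have pa: "\<forall>a\<in>set \<alpha>. 0 < a" and sa: "sum_list \<alpha> = ?m" using assms(2) by (auto simp: is_comp_def)
  have Ia: "Iset \<alpha> \<subseteq> {0<..<?m}" using Iset_range[OF pa] sa by simp
  have tle: "transp ((\<le>)::nat\<Rightarrow>nat\<Rightarrow>bool)" "transp ((\<ge>)::nat\<Rightarrow>nat\<Rightarrow>bool)"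
    "transp ((<)::nat\<Rightarrow>nat\<Rightarrow>bool)" "transp ((>)::nat\<Rightarrow>nat\<Rightarrow>bool)" by (auto simp: transp_def)
  have IC: "Iset \<beta> = Cs \<beta> \<inter> {0<..<?m}" if "\<forall>a\<in>set \<beta>. 0 < a" "sum_list \<beta> = ?m" for \<beta>
    using Iset_Cs[OF that(1)] that(2) by simp
  have IC0: "Iset \<beta> = Cs \<beta> \<inter> {0<..<?m}" if "0 \<notin> set \<beta>" "sum_list \<beta> = ?m" for \<beta>
    using IC[of \<beta>] that by (metis neq0_conv)
  have Cle: "Cs \<beta> \<subseteq> {..?m}" if "sum_list \<beta> = ?m" for \<beta>
    using Cs_le[of _ \<beta>] that by auto
  have cc: "(\<forall>a\<in>set (comp_c \<alpha>). 0 < a) \<and> sum_list (comp_c \<alpha>) = ?m \<and>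
         Iset (comp_c \<alpha>) = {0<..<?m} - Iset \<alpha>" using comp_c_prop[OF pa] sa by simp
  have pra: "\<forall>a\<in>set (rev \<alpha>). 0 < a" using pa by simp
  have ct: "(\<forall>a\<in>set (comp_t \<alpha>). 0 < a) \<and> sum_list (comp_t \<alpha>) = ?m \<and>
         Iset (comp_t \<alpha>) = {0<..<?m} - ?f ` Iset \<alpha>"
    using comp_c_prop[OF pra] sa Iset_rev[OF pa] by (simp add: comp_t_def)
  have P1: "Psi (zeta_le :: _ \<Rightarrow> 'k::field) (w, n) = fundL \<alpha>"
  proof
    fix \<beta>
    show "Psi (zeta_le :: _ \<Rightarrow> 'k::field) (w, n) \<beta> = fundL \<alpha> \<beta>"
      unfolding Psi_char[OF tle(1) zeta_le_def] desc_cond fundL_def is_comp_def assms(3)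
      using IC0[of \<beta>] Ia sa by auto
  qed
  have P2: "Psi (zeta_gt :: _ \<Rightarrow> 'k::field) (w, n) = fundL (comp_c \<alpha>)"
  proof
    fix \<beta>
    show "Psi (zeta_gt :: _ \<Rightarrow> 'k::field) (w, n) \<beta> = fundL (comp_c \<alpha>) \<beta>"
      unfolding Psi_char[OF tle(4) zeta_gt_def] asc_cond fundL_def is_comp_def assms(3)
      using IC0[of \<beta>] cc by auto
  qed
  have e2: "Iset (rev \<alpha>) = ?f ` Iset \<alpha>" using Iset_rev[OF pa] sa by simp
  have P3: "Psi (zeta_ge :: _ \<Rightarrow> 'k::field) (rev w, n) = fundL (rev \<alpha>)"
  proof
    fix \<beta>
    show "Psi (zeta_ge :: _ \<Rightarrow> 'k::field) (rev w, n) \<beta> = fundL (rev \<alpha>) \<beta>"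
    proof (cases "(\<forall>a\<in>set \<beta>. 0<a) \<and> sum_list \<beta> = ?m")
      case True
      have e1: "Cs (rev \<beta>) = ?f ` Cs \<beta>" using Cs_rev[of \<beta>] True by simp
      have key: "Iset \<alpha> \<subseteq> Cs (rev \<beta>) \<longleftrightarrow> Iset (rev \<alpha>) \<subseteq> Iset \<beta>"
        unfolding e1 e2 IC[OF True[THEN conjunct1] True[THEN conjunct2]]
        by (rule flip_sub[OF Ia Cle[OF True[THEN conjunct2]]])
      have d: "(\<forall>i. Suc i < ?m \<longrightarrow> Suc i \<notin> Cs (rev \<beta>) \<longrightarrow> w!Suc i \<ge> w!i) \<longleftrightarrow> Iset \<alpha> \<subseteq> Cs (rev \<beta>)"
        using desc_cond[of w "Cs (rev \<beta>)"] assms(3) by simp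
      show ?thesis unfolding Psi_rev[OF tle(2) zeta_ge_def] fundL_def is_comp_def
        using True key d sa by simp
    next
      case False
      then show ?thesis unfolding Psi_rev[OF tle(2) zeta_ge_def] fundL_def is_comp_def
        using sa by auto
    qed
  qed
  have P4: "Psi (zeta_lt :: _ \<Rightarrow> 'k::field) (rev w, n) = fundL (comp_t \<alpha>)"
  proof
    fix \<beta>
    show "Psi (zeta_lt :: _ \<Rightarrow> 'k::field) (rev w, n) \<beta> = fundL (comp_t \<alpha>) \<beta>"
    proof (cases "(\<forall>a\<in>set \<beta>. 0<a) \<and> sum_list \<beta> = ?m")
      case True
      have D: "{0<..<?m} - Iset \<alpha> \<subseteq> {0<..<?m}" by auto
      have e1: "Cs (rev \<beta>) = ?f ` Cs \<beta>" using Cs_rev[of \<beta>] True by simp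
      have e3: "Iset (comp_t \<alpha>) = ?f ` ({0<..<?m} - Iset \<alpha>)" using ct flip_diff[OF Ia] by simp
      have key: "{0<..<?m} - Iset \<alpha> \<subseteq> Cs (rev \<beta>) \<longleftrightarrow> Iset (comp_t \<alpha>) \<subseteq> Iset \<beta>"
        unfolding e1 e3 IC[OF True[THEN conjunct1] True[THEN conjunct2]]
        by (rule flip_sub[OF D Cle[OF True[THEN conjunct2]]])
      have d: "(\<forall>i. Suc i < ?m \<longrightarrow> Suc i \<notin> Cs (rev \<beta>) \<longrightarrow> w!Suc i < w!i) \<longleftrightarrow> {0<..<?m} - Iset \<alpha> \<subseteq> Cs (rev \<beta>)"
        using asc_cond[of w "Cs (rev \<beta>)"] assms(3) by simp
      show ?thesis unfolding Psi_rev[OF tle(3) zeta_lt_def] fundL_def is_comp_def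
        using True key d ct by simp
    next
      case False
      then show ?thesis unfolding Psi_rev[OF tle(3) zeta_lt_def] fundL_def is_comp_def
        using ct by auto
    qed
  qed
  show ?thesis using P1 P2 P3 P4 by blast
qed

end
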